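(* Let $G$ be a finite group acting linearly and isometrically on $\mathbb{R}^n$. Let $X=t_0+\epsilon$ where $\mathbb{E}(\epsilon)=0$ and $\epsilon$ is sub-Gaussian in the sense that there exist $c>0$, $s>0$ with $$\mathbb{E}\big(\exp\langle\epsilon,m\rangle\big)\le c\exp\Big(\frac{s^2\|m\|^2}{2}\Big)\quad\text{for all } m\in\mathbb{R}^n.$$ If $m\in\mathbb{R}^n$ satisfies $\tilde\rho:=d_Q([m],[t_0])\ge s\sqrt{2\log(c|G|)}$, then $$\tilde\rho^2-\tilde\rho\, s\sqrt{8\log(c|G|)}\le F(m)-\mathbb{E}(\|\epsilon\|^2).$$
   Context: The action is linear and isometric: each $x\mapsto g\cdot x$ is linear with $\|g\cdot x\|=\|x\|$ (Euclidean norm, inner product $\langle\cdot,\cdot\rangle$). $|G|$ is the cardinality of $G$, $d_Q([a],[b])=\min_{g\in G}\|g\cdot a-b\|$ and $F(m)=\mathbb{E}\big(\min_{g\in G}\|g\cdot X-m\|^2\big)$. *)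

theory Defs
  imports "HOL-Probability.Probability" "HOL-Algebra.Group"
begin

definition dQ :: "('g \<Rightarrow> 'v \<Rightarrow> 'v) \<Rightarrow> 'g set \<Rightarrow> 'v::real_normed_vector \<Rightarrow> 'v \<Rightarrow> real" where
  "dQ act Gc a b = Min ((\<lambda>g. norm (act g a - b)) ` Gc)"

definition Ffun :: "'w measure \<Rightarrow> ('g \<Rightarrow> 'v \<Rightarrow> 'v) \<Rightarrow> 'g set \<Rightarrow> ('w \<Rightarrow> 'v) \<Rightarrow> 'v::real_normed_vector \<Rightarrow> real" where
  "Ffun M act Gc X m = (\<integral>\<omega>. Min ((\<lambda>g. (norm (act g (X \<omega>) - m))\<^sup>2) ` Gc) \<partial>M)"

end

theory Submission
  imports Defs
begin

lemma sq_le_exp: "(x::real)^2 \<le> 2 * (exp x + exp (-x))"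
proof (cases "0 \<le> x")
  case True
  have "1 + x + x^2/2 \<le> exp x" using exp_lower_Taylor_quadratic[OF True] .
  moreover have "1 + (-x) \<le> exp (-x)" by (rule exp_ge_add_one_self)
  ultimately show ?thesis by argo
next
  case False
  have "1 + (-x) + x^2/2 \<le> exp (-x)" using exp_lower_Taylor_quadratic[of "-x"] False by simp
  moreover have "1 + x \<le> exp x" by (rule exp_ge_add_one_self)
  ultimately show ?thesis unfolding power2_eq_square by argo
qed

lemma norm_sq_vec: "(norm (x::real^'n))^2 = (\<Sum>i\<in>UNIV. (x \<bullet> axis i 1)^2)"
  unfolding power2_norm_eq_inner inner_axis by (simp add: inner_vec_def power2_eq_square)

lemma aux_field: "(s::real) \<noteq> 0 \<Longrightarrow> r + 1 \<noteq> 0 \<Longrightarrow> 2 * s^2 * r * (A / (4 * s^2 * (r + 1))) = A * (r / (2 * (r + 1)))"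
proof -
  assume a: "(s::real) \<noteq> 0" "r + 1 \<noteq> 0"
  have "2 * s^2 * r * (A / (4 * s^2 * (r + 1))) = ((2 * s^2) * (A * r)) / ((2 * s^2) * (2 * (r + 1)))"
    unfolding times_divide_eq_right by (simp add: algebra_simps)
  also have "\<dots> = (A * r) / (2 * (r + 1))" using a by (subst mult_divide_mult_cancel_left) auto
  finally show ?thesis by simp
qed

lemma adj_norm_le:
  fixes f :: "real^'n \<Rightarrow> real^'n"
  assumes "linear f" "\<And>x. norm (f x) = norm x"
  shows "norm (adjoint f a) \<le> norm a"
proof -
  let ?w = "adjoint f a"
  have "(norm ?w)^2 = f ?w \<bullet> a" using adjoint_works[OF assms(1), of ?w a]
    by (simp add: power2_norm_eq_inner)
  also have "\<dots> \<le> norm ?w * norm a" using norm_cauchy_schwarz[of "f ?w" a] assms(2) by simp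
  finally have "norm ?w * norm ?w \<le> norm ?w * norm a" by (simp add: power2_eq_square)
  then show ?thesis
    by (metis mult_le_cancel_left norm_ge_zero order.trans linorder_not_less mult_zero_left norm_le_zero_iff)
qed

theorem mainTheorem7:
  fixes G :: "('g, 'b) monoid_scheme"
    and act :: "'g \<Rightarrow> real^'n \<Rightarrow> real^'n"
    and M :: "'w measure"
    and eps :: "'w \<Rightarrow> real^'n"
    and t0 m :: "real^'n"
    and c s :: real
  assumes grp: "group G"
    and fin: "finite (carrier G)"
    and act_one: "act \<one>\<^bsub>G\<^esub> = id"
    and act_mult: "\<And>g h. g \<in> carrier G \<Longrightarrow> h \<in> carrier G \<Longrightarrow> act (g \<otimes>\<^bsub>G\<^esub> h) = act g \<circ> act h"
    and act_linear: "\<And>g. g \<in> carrier G \<Longrightarrow> linear (act g)"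
    and act_isom: "\<And>g x. g \<in> carrier G \<Longrightarrow> norm (act g x) = norm x"
    and P: "prob_space M"
    and eps_meas: "eps \<in> borel_measurable M"
    and eps_int: "integrable M eps"
    and eps_mean: "(\<integral>\<omega>. eps \<omega> \<partial>M) = 0"
    and c_pos: "c > 0" and s_pos: "s > 0"
    and subG: "\<And>v. (\<integral>\<^sup>+\<omega>. ennreal (exp (eps \<omega> \<bullet> v)) \<partial>M)
                     \<le> ennreal (c * exp (s\<^sup>2 * (norm v)\<^sup>2 / 2))"
    and far: "dQ act (carrier G) m t0 \<ge> s * sqrt (2 * ln (c * real (card (carrier G))))"
  shows "(dQ act (carrier G) m t0)\<^sup>2
           - dQ act (carrier G) m t0 * s * sqrt (8 * ln (c * real (card (carrier G))))
         \<le> Ffun M act (carrier G) (\<lambda>\<omega>. t0 + eps \<omega>) m - (\<integral>\<omega>. (norm (eps \<omega>))\<^sup>2 \<partial>M)"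
proof -
  interpret P: prob_space M by (rule P)
  interpret grp: group G by (rule grp)
  define C where "C = carrier G"
  define N where "N = card C"
  have Cfin: "finite C" using fin C_def by simp
  have oneC: "\<one>\<^bsub>G\<^esub> \<in> C" unfolding C_def by simp
  have Cne: "C \<noteq> {}" using oneC by auto
  have Npos: "1 \<le> N" using Cfin Cne N_def by (simp add: Suc_leI card_gt_0_iff)
  define \<rho> where "\<rho> = dQ act C m t0"
  define q where "q g = (norm (act g t0 - m))^2" for g
  define w where "w g = adjoint (act g) (act g t0 - m)" for g
  define Y where "Y \<omega> = Min ((\<lambda>g. q g + 2 * (eps \<omega> \<bullet> w g)) ` C)" for \<omega>
  have rho_le: "\<rho> \<le> norm (act g t0 - m)" if g: "g \<in> C" for g
  proof -
    let ?h = "inv\<^bsub>G\<^esub> g"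
    have gG: "g \<in> carrier G" using g C_def by simp
    have hG: "?h \<in> carrier G" using gG by simp
    have "act ?h \<circ> act g = id" using act_mult[OF hG gG] act_one grp.l_inv[OF gG] by simp
    then have hg: "act ?h (act g t0) = t0" by (metis comp_apply id_apply)
    have "act ?h m - t0 = act ?h (m - act g t0)"
      using linear_diff[OF act_linear[OF hG]] hg by simp
    then have "norm (act ?h m - t0) = norm (act g t0 - m)"
      using act_isom[OF hG] by (simp add: norm_minus_commute)
    moreover have "\<rho> \<le> norm (act ?h m - t0)"
      unfolding \<rho>_def dQ_def using Cfin hG C_def by (intro Min_le) auto
    ultimately show ?thesis by simp
  qed
  have rho_nn: "0 \<le> \<rho>"
  proof -
    have "\<rho> \<in> (\<lambda>g. norm (act g m - t0)) ` C" unfolding \<rho>_def dQ_def using Cfin Cne by (intro Min_in) auto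
    then show ?thesis by auto
  qed
  have q_ge: "\<rho>^2 \<le> q g" if "g \<in> C" for g
    unfolding q_def using rho_le[OF that] rho_nn by (intro power_mono) auto
  have w_le: "(norm (w g))^2 \<le> q g" if "g \<in> C" for g
    unfolding q_def w_def using that C_def act_linear act_isom
    by (intro power_mono adj_norm_le) auto
  have expand: "(norm (act g (t0 + e) - m))^2 = (norm e)^2 + (q g + 2 * (e \<bullet> w g))" if g: "g \<in> C" for g e
  proof -
    have gG: "g \<in> carrier G" using g C_def by simp
    have l: "act g (t0 + e) - m = (act g t0 - m) + act g e" using linear_add[OF act_linear[OF gG]] by simp
    have "(norm ((act g t0 - m) + act g e))^2 = (norm (act g t0 - m))^2 + 2 * (act g e \<bullet> (act g t0 - m)) + (norm (act g e))^2"
    proof -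
      define a where "a = act g t0 - m"
      define b where "b = act g e"
      have "(norm (a+b))^2 = (a+b)\<bullet>(a+b)" by (rule power2_norm_eq_inner)
      also have "\<dots> = a\<bullet>a + 2*(b\<bullet>a) + b\<bullet>b" by (simp add: inner_add_left inner_add_right inner_commute[of a b])
      also have "\<dots> = (norm a)^2 + 2*(b\<bullet>a) + (norm b)^2" by (simp add: power2_norm_eq_inner)
      finally show ?thesis unfolding a_def b_def .
    qed
    moreover have "act g e \<bullet> (act g t0 - m) = e \<bullet> w g"
      unfolding w_def using adjoint_works[OF act_linear[OF gG], of e "act g t0 - m"] by simp
    ultimately have "(norm ((act g t0 - m) + act g e))^2 = (norm e)^2 + (q g + 2 * (e \<bullet> w g))"
      using act_isom[OF gG] unfolding q_def by simp
    then show ?thesis by (simp only: l)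
  qed
  have Zeq: "Min ((\<lambda>g. (norm (act g (t0 + eps \<omega>) - m))^2) ` C) = (norm (eps \<omega>))^2 + Y \<omega>" for \<omega>
  proof -
    have "(\<lambda>g. (norm (act g (t0 + eps \<omega>) - m))^2) ` C = (\<lambda>x. (norm (eps \<omega>))^2 + x) ` ((\<lambda>g. q g + 2 * (eps \<omega> \<bullet> w g)) ` C)"
      unfolding image_image by (rule image_cong) (simp_all add: expand)
    moreover have "Min ((\<lambda>x. (norm (eps \<omega>))^2 + x) ` ((\<lambda>g. q g + 2 * (eps \<omega> \<bullet> w g)) ` C))
        = (norm (eps \<omega>))^2 + Min ((\<lambda>g. q g + 2 * (eps \<omega> \<bullet> w g)) ` C)"
      by (rule mono_Min_commute[symmetric]) (auto simp: mono_def Cfin Cne)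
    ultimately show ?thesis unfolding Y_def by simp
  qed
  have Y_in: "\<exists>g\<in>C. Y \<omega> = q g + 2 * (eps \<omega> \<bullet> w g)" for \<omega>
  proof -
    have "Y \<omega> \<in> (\<lambda>g. q g + 2 * (eps \<omega> \<bullet> w g)) ` C" unfolding Y_def using Cfin Cne by (intro Min_in) auto
    then show ?thesis by auto
  qed
  have inner_int: "integrable M (\<lambda>\<omega>. eps \<omega> \<bullet> v)" for v
    by (rule integrable_inner_left) (simp add: eps_int)
  have inner_meas: "(\<lambda>\<omega>. eps \<omega> \<bullet> v) \<in> borel_measurable M" for v
    using inner_int by (rule borel_measurable_integrable)
  have expmeas: "(\<lambda>\<omega>. exp (eps \<omega> \<bullet> v)) \<in> borel_measurable M" for v
    using inner_meas[of v] by measurable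
  have expint: "integrable M (\<lambda>\<omega>. exp (eps \<omega> \<bullet> v))" for v
  proof (rule integrableI_nonneg)
    show "(\<integral>\<^sup>+\<omega>. ennreal (exp (eps \<omega> \<bullet> v)) \<partial>M) < \<infinity>"
      using subG[of v] by (simp add: le_less_trans)
  qed (auto simp: expmeas)
  have expbound: "(\<integral>\<omega>. exp (eps \<omega> \<bullet> v) \<partial>M) \<le> c * exp (s\<^sup>2 * (norm v)\<^sup>2 / 2)" for v
  proof -
    have "ennreal (\<integral>\<omega>. exp (eps \<omega> \<bullet> v) \<partial>M) = (\<integral>\<^sup>+\<omega>. ennreal (exp (eps \<omega> \<bullet> v)) \<partial>M)"
      by (rule nn_integral_eq_integral[symmetric]) (auto simp: expint)
    then have "ennreal (\<integral>\<omega>. exp (eps \<omega> \<bullet> v) \<partial>M) \<le> ennreal (c * exp (s\<^sup>2 * (norm v)\<^sup>2 / 2))"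
      using subG[of v] by simp
    then show ?thesis using c_pos by (subst (asm) ennreal_le_iff) auto
  qed
  have c_ge1: "1 \<le> c" using expbound[of 0] by (simp add: P.prob_space)
  have sqmeas: "(\<lambda>\<omega>. (norm (eps \<omega>))^2) \<in> borel_measurable M" using eps_meas by measurable
  have sqint: "integrable M (\<lambda>\<omega>. (norm (eps \<omega>))^2)"
  proof (rule Bochner_Integration.integrable_bound[OF _ sqmeas])
    show "integrable M (\<lambda>\<omega>. \<Sum>i\<in>UNIV. 2 * (exp (eps \<omega> \<bullet> axis i 1) + exp (eps \<omega> \<bullet> (- axis i 1))))"
      by (intro Bochner_Integration.integrable_sum Bochner_Integration.integrable_mult_right Bochner_Integration.integrable_add expint)
    show "AE \<omega> in M. norm ((norm (eps \<omega>))^2) \<le> norm (\<Sum>i\<in>UNIV. 2 * (exp (eps \<omega> \<bullet> axis i 1) + exp (eps \<omega> \<bullet> (- axis i 1))))"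
    proof (rule AE_I2)
      fix \<omega>
      have "(norm (eps \<omega>))^2 \<le> (\<Sum>i\<in>UNIV. 2 * (exp (eps \<omega> \<bullet> axis i 1) + exp (eps \<omega> \<bullet> (- axis i 1))))"
        unfolding norm_sq_vec using sq_le_exp by (intro sum_mono) (simp add: inner_minus_right)
      moreover have "0 \<le> (\<Sum>i\<in>UNIV. 2 * (exp (eps \<omega> \<bullet> axis i 1) + exp (eps \<omega> \<bullet> (- axis i 1))))"
        by (intro sum_nonneg) auto
      ultimately show "norm ((norm (eps \<omega>))^2) \<le> norm (\<Sum>i\<in>UNIV. 2 * (exp (eps \<omega> \<bullet> axis i 1) + exp (eps \<omega> \<bullet> (- axis i 1))))"
        by simp
    qed
  qed
  have termint: "integrable M (\<lambda>\<omega>. q g + 2 * (eps \<omega> \<bullet> w g))" for g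
    using inner_int[of "w g"] by auto
  have Ymeas: "Y \<in> borel_measurable M"
    unfolding Y_def by (rule borel_measurable_Min[OF Cfin]) (rule borel_measurable_integrable[OF termint])
  have Yint: "integrable M Y"
  proof (rule Bochner_Integration.integrable_bound[OF _ Ymeas])
    show "integrable M (\<lambda>\<omega>. \<Sum>g\<in>C. \<bar>q g + 2 * (eps \<omega> \<bullet> w g)\<bar>)"
      using termint by (intro Bochner_Integration.integrable_sum integrable_abs) auto
    show "AE \<omega> in M. norm (Y \<omega>) \<le> norm (\<Sum>g\<in>C. \<bar>q g + 2 * (eps \<omega> \<bullet> w g)\<bar>)"
    proof (rule AE_I2)
      fix \<omega>
      obtain g where g: "g \<in> C" "Y \<omega> = q g + 2 * (eps \<omega> \<bullet> w g)" using Y_in by blast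
      have "\<bar>Y \<omega>\<bar> \<le> (\<Sum>g\<in>C. \<bar>q g + 2 * (eps \<omega> \<bullet> w g)\<bar>)"
        using g Cfin by (auto intro: member_le_sum)
      moreover have "0 \<le> (\<Sum>g\<in>C. \<bar>q g + 2 * (eps \<omega> \<bullet> w g)\<bar>)" by (intro sum_nonneg) auto
      ultimately show "norm (Y \<omega>) \<le> norm (\<Sum>g\<in>C. \<bar>q g + 2 * (eps \<omega> \<bullet> w g)\<bar>)" by simp
    qed
  qed
  define \<mu> where "\<mu> = (\<integral>\<omega>. Y \<omega> \<partial>M)"
  have Feq: "Ffun M act (carrier G) (\<lambda>\<omega>. t0 + eps \<omega>) m - (\<integral>\<omega>. (norm (eps \<omega>))\<^sup>2 \<partial>M) = \<mu>"
  proof -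
    have "Ffun M act (carrier G) (\<lambda>\<omega>. t0 + eps \<omega>) m = (\<integral>\<omega>. (norm (eps \<omega>))^2 + Y \<omega> \<partial>M)"
      unfolding Ffun_def C_def[symmetric] using Zeq by simp
    also have "\<dots> = (\<integral>\<omega>. (norm (eps \<omega>))^2 \<partial>M) + (\<integral>\<omega>. Y \<omega> \<partial>M)" using sqint Yint by (rule Bochner_Integration.integral_add)
    finally show ?thesis unfolding \<mu>_def by simp
  qed
  define L where "L = ln (c * real N)"
  have cN: "1 \<le> c * real N"
  proof -
    have "1 \<le> real N" using Npos by simp
    then have "1 * 1 \<le> c * real N" using c_ge1 by (intro mult_mono) auto
    then show ?thesis by simp
  qed
  have L_nn: "0 \<le> L" using cN unfolding L_def by simp
  have expL: "exp L = c * real N" unfolding L_def using cN by simp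
  have key: "\<rho>^2 * (1 - 2*lam * s^2) - L / lam \<le> \<mu>" if lam: "0 < lam" "lam \<le> 1/(2 * s^2)" for lam
  proof -
    have l2: "0 \<le> 1 - 2*lam * s^2" using lam s_pos by (simp add: field_simps)
    define E where "E g = (\<lambda>\<omega>. exp (- lam * (q g + 2 * (eps \<omega> \<bullet> w g))))" for g
    have Eeq: "E g = (\<lambda>\<omega>. exp (- lam * q g) * exp (eps \<omega> \<bullet> ((-2*lam) *\<^sub>R w g)))" for g
      unfolding E_def by (rule ext) (simp add: mult_exp_exp algebra_simps)
    have Eint: "integrable M (E g)" for g
      unfolding Eeq by (intro Bochner_Integration.integrable_mult_right expint)
    have Ebound: "(\<integral>\<omega>. E g \<omega> \<partial>M) \<le> c * exp (- lam * \<rho>^2 * (1 - 2*lam * s^2))" if g: "g \<in> C" for g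
    proof -
      have "(\<integral>\<omega>. E g \<omega> \<partial>M) = exp (- lam * q g) * (\<integral>\<omega>. exp (eps \<omega> \<bullet> ((-2*lam) *\<^sub>R w g)) \<partial>M)"
        unfolding Eeq by simp
      also have "\<dots> \<le> exp (- lam * q g) * (c * exp (s^2 * (norm ((-2*lam) *\<^sub>R w g))^2 / 2))"
        by (rule mult_left_mono[OF expbound]) simp
      also have "\<dots> = c * exp (- lam * q g + 2 * lam^2 * s^2 * (norm (w g))^2)"
        by (simp add: mult_exp_exp power_mult_distrib power2_eq_square algebra_simps)
      also have "\<dots> \<le> c * exp (- lam * \<rho>^2 * (1 - 2*lam * s^2))"
      proof -
        have "2 * lam^2 * s^2 * (norm (w g))^2 \<le> 2 * lam^2 * s^2 * q g"
          using w_le[OF g] by (intro mult_left_mono) auto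
        moreover have "lam * (1 - 2*lam * s^2) * \<rho>^2 \<le> lam * (1 - 2*lam * s^2) * q g"
          using q_ge[OF g] lam l2 by (intro mult_left_mono) auto
        ultimately have "- lam * q g + 2 * lam^2 * s^2 * (norm (w g))^2 \<le> - lam * \<rho>^2 * (1 - 2*lam * s^2)"
          by (simp add: algebra_simps power2_eq_square)
        then show ?thesis using c_pos by simp
      qed
      finally show ?thesis .
    qed
    have expYmeas: "(\<lambda>\<omega>. exp (- lam * Y \<omega>)) \<in> borel_measurable M" using Ymeas by measurable
    have pt: "exp (- lam * Y \<omega>) \<le> (\<Sum>g\<in>C. E g \<omega>)" for \<omega>
    proof -
      obtain g where g: "g \<in> C" "Y \<omega> = q g + 2 * (eps \<omega> \<bullet> w g)" using Y_in by blast
      have "exp (- lam * Y \<omega>) = E g \<omega>" unfolding E_def using g by simp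
      also have "\<dots> \<le> (\<Sum>g\<in>C. E g \<omega>)" using g Cfin by (auto intro: member_le_sum simp: E_def)
      finally show ?thesis .
    qed
    have expYint: "integrable M (\<lambda>\<omega>. exp (- lam * Y \<omega>))"
    proof (rule Bochner_Integration.integrable_bound[OF _ expYmeas])
      show "integrable M (\<lambda>\<omega>. \<Sum>g\<in>C. E g \<omega>)" using Eint by (intro Bochner_Integration.integrable_sum) auto
      show "AE \<omega> in M. norm (exp (- lam * Y \<omega>)) \<le> norm (\<Sum>g\<in>C. E g \<omega>)"
      proof (rule AE_I2)
        fix \<omega>
        have "0 \<le> (\<Sum>g\<in>C. E g \<omega>)" by (intro sum_nonneg) (auto simp: E_def)
        then show "norm (exp (- lam * Y \<omega>)) \<le> norm (\<Sum>g\<in>C. E g \<omega>)" using pt[of \<omega>] by simp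
      qed
    qed
    have "(\<integral>\<omega>. exp (- lam * Y \<omega>) \<partial>M) \<le> (\<integral>\<omega>. (\<Sum>g\<in>C. E g \<omega>) \<partial>M)"
      using expYint Eint pt by (intro Bochner_Integration.integral_mono Bochner_Integration.integrable_sum) auto
    also have "\<dots> = (\<Sum>g\<in>C. \<integral>\<omega>. E g \<omega> \<partial>M)" by (rule Bochner_Integration.integral_sum) (simp add: Eint)
    also have "\<dots> \<le> (\<Sum>g\<in>C. c * exp (- lam * \<rho>^2 * (1 - 2*lam * s^2)))" by (rule sum_mono) (rule Ebound)
    also have "\<dots> = exp L * exp (- lam * \<rho>^2 * (1 - 2*lam * s^2))" by (simp add: N_def expL)
    also have "\<dots> = exp (L - lam * \<rho>^2 * (1 - 2*lam * s^2))" by (simp add: mult_exp_exp)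
    finally have upper: "(\<integral>\<omega>. exp (- lam * Y \<omega>) \<partial>M) \<le> exp (L - lam * \<rho>^2 * (1 - 2*lam * s^2))" .
    have jensen: "exp (- lam * \<mu>) \<le> (\<integral>\<omega>. exp (- lam * Y \<omega>) \<partial>M)"
    proof -
      define a where "a = exp (- lam * \<mu>)"
      have "(\<integral>\<omega>. (a + a*lam*\<mu>) - (a*lam) * Y \<omega> \<partial>M) = (a + a*lam*\<mu>) - (a*lam) * \<mu>"
        using Yint by (simp add: P.prob_space \<mu>_def)
      also have "\<dots> = a" by simp
      finally have eq: "(\<integral>\<omega>. (a + a*lam*\<mu>) - (a*lam) * Y \<omega> \<partial>M) = a" .
      have "(\<integral>\<omega>. (a + a*lam*\<mu>) - (a*lam) * Y \<omega> \<partial>M) \<le> (\<integral>\<omega>. exp (- lam * Y \<omega>) \<partial>M)"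
      proof (rule Bochner_Integration.integral_mono)
        show "integrable M (\<lambda>\<omega>. (a + a*lam*\<mu>) - (a*lam) * Y \<omega>)" using Yint by auto
        show "integrable M (\<lambda>\<omega>. exp (- lam * Y \<omega>))" by (rule expYint)
        fix \<omega>
        have "1 + (- lam * (Y \<omega> - \<mu>)) \<le> exp (- lam * (Y \<omega> - \<mu>))" by (rule exp_ge_add_one_self)
        then have "a * (1 + (- lam * (Y \<omega> - \<mu>))) \<le> a * exp (- lam * (Y \<omega> - \<mu>))"
          unfolding a_def by (intro mult_left_mono) auto
        also have "a * exp (- lam * (Y \<omega> - \<mu>)) = exp (- lam * Y \<omega>)"
          unfolding a_def by (simp add: mult_exp_exp algebra_simps)
        finally show "(a + a*lam*\<mu>) - (a*lam) * Y \<omega> \<le> exp (- lam * Y \<omega>)" by (simp add: algebra_simps)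
      qed
      then show ?thesis using eq unfolding a_def by simp
    qed
    have "exp (- lam * \<mu>) \<le> exp (L - lam * \<rho>^2 * (1 - 2*lam * s^2))" using jensen upper by (rule order_trans)
    then have "- lam * \<mu> \<le> L - lam * \<rho>^2 * (1 - 2*lam * s^2)" by (simp only: exp_le_cancel_iff)
    then have "lam * (\<rho>^2 * (1 - 2*lam * s^2) - L / lam) \<le> lam * \<mu>" using lam by (simp add: algebra_simps)
    then show ?thesis using lam by simp
  qed
  have far': "s * sqrt (2 * L) \<le> \<rho>" using far unfolding \<rho>_def L_def N_def C_def .
  have goal: "\<rho>^2 - \<rho> * s * sqrt (8 * L) \<le> \<mu>"
  proof (cases "L = 0")
    case True
    show ?thesis
    proof (rule ccontr)
      assume "\<not> ?thesis"
      then have d: "\<mu> < \<rho>^2" using True by simp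
      define lam where "lam = min (1/(2 * s^2)) ((\<rho>^2 - \<mu>)/(4 * s^2*(\<rho>^2+1)))"
      have rp: "0 < \<rho>^2+1" by (simp add: add_nonneg_pos)
      have "0 < (\<rho>^2 - \<mu>)/(4 * s^2*(\<rho>^2+1))" using d s_pos rp by (intro divide_pos_pos mult_pos_pos) auto
      then have lpos: "0 < lam" unfolding lam_def using s_pos by simp
      have lle: "lam \<le> 1/(2 * s^2)" unfolding lam_def by simp
      have "\<rho>^2 * (1 - 2*lam * s^2) \<le> \<mu>" using key[OF lpos lle] True by simp
      then have h1: "\<rho>^2 - \<mu> \<le> 2 * s^2*\<rho>^2 * lam" by (simp add: algebra_simps)
      have "lam \<le> (\<rho>^2 - \<mu>)/(4 * s^2*(\<rho>^2+1))" unfolding lam_def by simp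
      then have "2 * s^2*\<rho>^2 * lam \<le> 2 * s^2*\<rho>^2 * ((\<rho>^2 - \<mu>)/(4 * s^2*(\<rho>^2+1)))"
        by (intro mult_left_mono) auto
      also have "\<dots> = (\<rho>^2 - \<mu>) * (\<rho>^2 / (2*(\<rho>^2+1)))"
      proof -
        show ?thesis using s_pos rp by (intro aux_field) auto
      qed
      also have "\<dots> < (\<rho>^2 - \<mu>) * 1"
      proof (rule mult_strict_left_mono)
        show "\<rho>^2 / (2*(\<rho>^2+1)) < 1" using rp by (simp add: divide_less_eq)
      qed (use d in simp)
      finally show False using h1 by simp
    qed
  next
    case False
    then have Lpos: "0 < L" using L_nn by simp
    define r where "r = sqrt L"
    define t where "t = sqrt (2::real)"
    have rpos: "0 < r" unfolding r_def using Lpos by simp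
    have tpos: "0 < t" unfolding t_def by simp
    have tt: "t * t = 2" unfolding t_def by simp
    have rr: "r * r = L" unfolding r_def using L_nn by simp
    have s2L: "sqrt (2 * L) = t * r" unfolding t_def r_def by (simp add: real_sqrt_mult)
    have s8L: "sqrt (8 * L) = 2 * t * r"
    proof -
      have "sqrt (8 * L) = sqrt (2 * 2 * (2 * L))" by simp
      also have "\<dots> = 2 * sqrt (2 * L)" by (simp only: real_sqrt_mult) simp
      finally show ?thesis using s2L by simp
    qed
    have rho_ge: "s * t * r \<le> \<rho>" using far' s2L by (simp add: mult.assoc)
    have rhopos: "0 < \<rho>" using rho_ge s_pos tpos rpos by (smt (verit) mult_pos_pos)
    define lam where "lam = r / (t * s * \<rho>)"
    have lpos: "0 < lam" unfolding lam_def using rpos tpos s_pos rhopos by simp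
    have lle: "lam \<le> 1/(2 * s^2)"
    proof -
      have "r * (2 * s^2) = t * s * (s * t * r)" using tt by (simp add: power2_eq_square algebra_simps)
      also have "\<dots> \<le> t * s * \<rho>" using rho_ge tpos s_pos by (intro mult_left_mono) auto
      finally show ?thesis unfolding lam_def using tpos s_pos rhopos by (simp add: field_simps)
    qed
    have e1: "2 * lam * s^2 * \<rho>^2 = t * r * s * \<rho>"
    proof -
      have "2 * lam * s^2 * \<rho>^2 = (t * t) * r * s * \<rho> / t" unfolding lam_def using tt tpos s_pos rhopos
        by (simp add: field_simps power2_eq_square)
      then show ?thesis using tpos by simp
    qed
    have e2: "L / lam = t * r * s * \<rho>"
      unfolding lam_def using rr[symmetric] rpos tpos s_pos rhopos by (simp add: field_simps)
    have "\<rho>^2 - \<rho> * s * sqrt (8 * L) = \<rho>^2 * (1 - 2*lam * s^2) - L / lam"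
      using e1 e2 s8L by (simp add: algebra_simps)
    also have "\<dots> \<le> \<mu>" using key[OF lpos lle] .
    finally show ?thesis .
  qed
  show ?thesis using goal Feq unfolding \<rho>_def L_def N_def C_def by simp
qed

end
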